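(* Let $K$ be a real biquadratic field with quadratic subfields $k_1=\mathbb{Q}(\sqrt{d_1})$, $k_2=\mathbb{Q}(\sqrt{d_2})$, $k_3=\mathbb{Q}(\sqrt{d_1d_2})$, whose fundamental units $\epsilon_1,\epsilon_2,\epsilon_3$ each have norm $+1$. For $i=1,2,3$ let $m_i$ be the squarefree part of the positive integer $\mathrm{Norm}_{k_i/\mathbb{Q}}(\epsilon_i+1)$. Let $E_K$ be the unit group of $K$. Then for integers $n_1,n_2,n_3$, the unit $\epsilon_1^{n_1}\epsilon_2^{n_2}\epsilon_3^{n_3}$ is a square in $E_K$ if and only if $m_1^{n_1}m_2^{n_2}m_3^{n_3}$ equals one of $1,d_1,d_2,d_1d_2$ up to the square of a rational number.
   Context: Here $d_1,d_2$ are integers such that the three fields listed are the distinct real quadratic subfields of $K$. *)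

theory Defs
  imports "HOL-Analysis.Analysis" "HOL-Computational_Algebra.Computational_Algebra"
begin

definition qfield :: "int \<Rightarrow> real set" where
  "qfield d = {of_rat a + of_rat b * sqrt (of_int d) | a b. True}"

definition biquad_field :: "int \<Rightarrow> int \<Rightarrow> real set" where
  "biquad_field d1 d2 = {of_rat a + of_rat b * sqrt (of_int d1) + of_rat c * sqrt (of_int d2)
       + of_rat e * sqrt (of_int d1) * sqrt (of_int d2) | a b c e. True}"

definition unit_group :: "real set \<Rightarrow> real set" where
  "unit_group F = {x \<in> F. x \<noteq> 0 \<and> algebraic_int x \<and> algebraic_int (1 / x)}"

definition qnorm :: "int \<Rightarrow> real \<Rightarrow> rat" where
  "qnorm d x = (THE N. \<exists>a b. x = of_rat a + of_rat b * sqrt (of_int d)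
                        \<and> N = a ^ 2 - of_int d * b ^ 2)"

definition fundamental_unit :: "int \<Rightarrow> real \<Rightarrow> bool" where
  "fundamental_unit d \<epsilon> \<longleftrightarrow> \<epsilon> \<in> unit_group (qfield d) \<and> \<epsilon> > 1 \<and>
     (\<forall>u \<in> unit_group (qfield d). \<exists>n::int. u = \<epsilon> powi n \<or> u = - (\<epsilon> powi n))"

definition nonsquare :: "int \<Rightarrow> bool" where
  "nonsquare d \<longleftrightarrow> (\<nexists>s::int. d = s ^ 2)"

end

theory Submission
  imports Defs "Jordan_Normal_Form.Char_Poly"
begin

inductive_set zsp :: "real set \<Rightarrow> real set" for A where
  zsp_0: "0 \<in> zsp A"
| zsp_gen: "a \<in> A \<Longrightarrow> a \<in> zsp A"
| zsp_add: "x \<in> zsp A \<Longrightarrow> y \<in> zsp A \<Longrightarrow> x + y \<in> zsp A"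
| zsp_neg: "x \<in> zsp A \<Longrightarrow> - x \<in> zsp A"

lemma zsp_repr:
  assumes "finite A" "x \<in> zsp A"
  shows "\<exists>c. x = (\<Sum>b\<in>A. of_int (c b) * b)"
  using assms(2)
proof induction
  case zsp_0
  show ?case by (rule exI[of _ "\<lambda>_. 0"]) simp
next
  case (zsp_gen a)
  have "(\<Sum>b\<in>A. of_int (if b = a then 1 else 0) * b) = (\<Sum>b\<in>A. if b = a then b else 0)"
    by (rule sum.cong) auto
  also have "\<dots> = a" using zsp_gen assms(1) by (simp add: sum.delta')
  finally show ?case by metis
next
  case (zsp_add x y)
  then obtain c1 c2 where "x = (\<Sum>b\<in>A. of_int (c1 b) * b)" "y = (\<Sum>b\<in>A. of_int (c2 b) * b)" by blast
  then show ?case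
    by (intro exI[of _ "\<lambda>b. c1 b + c2 b"]) (simp add: sum.distrib distrib_right)
next
  case (zsp_neg x)
  then obtain c1 where "x = (\<Sum>b\<in>A. of_int (c1 b) * b)" by blast
  then show ?case
    by (intro exI[of _ "\<lambda>b. - c1 b"]) (simp add: sum_negf)
qed

lemma zsp_diff: "x \<in> zsp A \<Longrightarrow> y \<in> zsp A \<Longrightarrow> x - y \<in> zsp A"
  using zsp_add[OF _ zsp_neg] by (metis diff_conv_add_uminus)

lemma zsp_nat_mult: "x \<in> zsp A \<Longrightarrow> of_nat k * x \<in> zsp A"
  by (induction k) (auto simp: distrib_right intro: zsp_add zsp_0)

lemma zsp_int_mult: assumes x: "x \<in> zsp A" shows "of_int k * x \<in> zsp A"
proof (cases "k \<ge> 0")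
  case True
  then show ?thesis using zsp_nat_mult[OF x, of "nat k"] by simp
next
  case False
  then show ?thesis using zsp_neg[OF zsp_nat_mult[OF x, of "nat (-k)"]] by simp
qed

lemma zsp_sum: "finite I \<Longrightarrow> (\<And>i. i \<in> I \<Longrightarrow> f i \<in> zsp A) \<Longrightarrow> sum f I \<in> zsp A"
  by (induction I rule: finite_induct) (auto intro: zsp_add zsp_0)

lemma zsp_stab:
  assumes "\<And>a. a \<in> A \<Longrightarrow> y * a \<in> zsp B" "x \<in> zsp A"
  shows "y * x \<in> zsp B"
  using assms(2)
  by induction (auto simp: distrib_left intro: zsp_0 zsp_add zsp_neg assms(1))

definition pset :: "real set \<Rightarrow> real set \<Rightarrow> real set" where
  "pset A B = (\<lambda>(a, b). a * b) ` (A \<times> B)"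

lemma zsp_prod:
  assumes "x \<in> zsp A" "y \<in> zsp B"
  shows "x * y \<in> zsp (pset A B)"
  using assms(1)
proof induction
  case zsp_0 then show ?case by (simp add: zsp.zsp_0)
next
  case (zsp_gen a)
  from assms(2) show ?case
  proof induction
    case (zsp_gen b) then show ?case
      using \<open>a \<in> A\<close> by (intro zsp.zsp_gen) (auto simp: pset_def)
  qed (auto simp: distrib_left intro: zsp.intros)
qed (auto simp: distrib_right intro: zsp.intros)

lemma det_trick:
  fixes y :: real
  assumes fin: "finite A" and one: "1 \<in> A" and st: "\<And>a. a \<in> A \<Longrightarrow> y * a \<in> zsp A"
  shows "algebraic_int y"
proof -
  define n where "n = card A"
  obtain h where h: "bij_betw h {0..<n} A"
    using ex_bij_betw_nat_finite[OF fin] unfolding n_def by blast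
  have "\<forall>a\<in>A. \<exists>c. y * a = (\<Sum>b\<in>A. of_int (c b) * b)"
    using zsp_repr[OF fin] st by blast
  then obtain c where c: "\<And>a. a \<in> A \<Longrightarrow> y * a = (\<Sum>b\<in>A. of_int (c a b) * b)"
    by metis
  define C :: "int mat" where "C = mat n n (\<lambda>(i, j). c (h i) (h j))"
  define v :: "real vec" where "v = vec n h"
  have Cc: "C \<in> carrier_mat n n" by (simp add: C_def)
  have Cr: "map_mat of_int C \<in> carrier_mat n n" by (simp add: C_def)
  have hi: "h i \<in> A" if "i < n" for i using h that by (auto simp: bij_betw_def)
  have Cv: "map_mat of_int C *\<^sub>v v = y \<cdot>\<^sub>v v"
  proof (rule eq_vecI)
    fix i assume i: "i < dim_vec (y \<cdot>\<^sub>v v)"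
    then have i': "i < n" by (simp add: v_def)
    have "(map_mat of_int C *\<^sub>v v) $ i = (\<Sum>j<n. of_int (c (h i) (h j)) * h j)"
      using i' by (simp add: C_def v_def scalar_prod_def row_def atLeast0LessThan)
    also have "\<dots> = (\<Sum>b\<in>A. of_int (c (h i) b) * b)"
      using sum.reindex_bij_betw[OF h, of "\<lambda>b. of_int (c (h i) b) * b"]
      by (simp add: atLeast0LessThan)
    also have "\<dots> = y * h i" using c[OF hi[OF i']] by simp
    finally show "(map_mat of_int C *\<^sub>v v) $ i = (y \<cdot>\<^sub>v v) $ i"
      using i' by (simp add: v_def)
  qed (simp add: v_def C_def)
  obtain i0 where i0: "i0 < n" "h i0 = 1"
    using h one by (auto simp: bij_betw_def)
  have vne: "v \<noteq> 0\<^sub>v n"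
  proof
    assume "v = 0\<^sub>v n"
    then have "v $ i0 = 0" using i0 by simp
    then show False using i0 by (simp add: v_def)
  qed
  have "eigenvector (map_mat of_int C) v y"
    unfolding eigenvector_def using Cv vne Cr by (simp add: v_def)
  then have "eigenvalue (map_mat of_int C) y" unfolding eigenvalue_def by blast
  then have "poly (char_poly (map_mat of_int C)) y = 0"
    by (rule iffD1[OF eigenvalue_root_char_poly[OF Cr]])
  moreover have "char_poly (map_mat of_int C :: real mat) = map_poly of_int (char_poly C)"
    using of_int_hom.char_poly_hom[OF Cc] by simp
  moreover have "lead_coeff (char_poly C) = 1"
    using degree_monic_char_poly[OF Cc] by simp
  ultimately have "poly (map_poly of_int (char_poly C)) y = 0 \<and> lead_coeff (char_poly C) = 1"
    by simp
  then show ?thesis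
    unfolding algebraic_int_altdef_ipoly by blast
qed

lemma algint_module:
  fixes x :: real
  assumes "algebraic_int x"
  shows "\<exists>A. finite A \<and> 1 \<in> A \<and> (\<forall>a\<in>A. x * a \<in> zsp A)"
proof -
  obtain p where p: "poly (map_poly of_int p) x = 0" "lead_coeff p = 1"
    using assms unfolding algebraic_int_altdef_ipoly by blast
  define k where "k = degree p"
  have kpos: "k > 0"
  proof (rule ccontr)
    assume "\<not> k > 0"
    then have "degree p = 0" by (simp add: k_def)
    then have "p = [:1:]" using p(2) by (metis degree_0_id)
    then show False using p(1) by simp
  qed
  define A where "A = (\<lambda>i. x ^ i) ` {..<k}"
  have deg: "degree (map_poly (of_int :: int \<Rightarrow> real) p) = k"
    by (simp add: k_def)
  have "0 = (\<Sum>i\<le>k. of_int (coeff p i) * x ^ i)"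
    using p(1) deg by (simp add: poly_altdef coeff_map_poly)
  also have "\<dots> = (\<Sum>i<k. of_int (coeff p i) * x ^ i) + x ^ k"
    using p(2) by (simp add: lessThan_Suc_atMost[symmetric] k_def)
  finally have xk: "x ^ k = - (\<Sum>i<k. of_int (coeff p i) * x ^ i)" by linarith
  have "x ^ k \<in> zsp A"
    unfolding xk
    by (intro zsp_neg zsp_sum zsp_int_mult zsp_gen) (auto simp: A_def)
  have "\<forall>a\<in>A. x * a \<in> zsp A"
  proof
    fix a assume "a \<in> A"
    then obtain i where i: "i < k" "a = x ^ i" by (auto simp: A_def)
    show "x * a \<in> zsp A"
    proof (cases "Suc i < k")
      case True
      then have "x * a \<in> A" using i unfolding A_def by (auto intro!: image_eqI[of _ _ "Suc i"])
      then show ?thesis by (rule zsp_gen)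
    next
      case False
      then have "Suc i = k" using i by simp
      then have "x * a = x ^ k" using i by (metis power_Suc)
      then show ?thesis using \<open>x ^ k \<in> zsp A\<close> by simp
    qed
  qed
  moreover have "1 \<in> A" using kpos by (auto simp: A_def intro: image_eqI[of _ _ 0])
  moreover have "finite A" by (simp add: A_def)
  ultimately show ?thesis by blast
qed

lemma algint_stab_common:
  fixes x y :: real
  assumes "algebraic_int x" "algebraic_int y"
  shows "\<exists>C. finite C \<and> 1 \<in> C \<and> (\<forall>c\<in>C. x * c \<in> zsp C) \<and> (\<forall>c\<in>C. y * c \<in> zsp C)"
proof -
  obtain A where A: "finite A" "1 \<in> A" "\<forall>a\<in>A. x * a \<in> zsp A" using algint_module[OF assms(1)] by blast
  obtain B where B: "finite B" "1 \<in> B" "\<forall>a\<in>B. y * a \<in> zsp B" using algint_module[OF assms(2)] by blast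
  define C where "C = pset A B"
  have "finite C" using A B by (simp add: C_def pset_def)
  moreover have "1 \<in> C" using A B unfolding C_def pset_def by (auto intro: image_eqI[of _ _ "(1,1)"])
  moreover have "\<forall>c\<in>C. x * c \<in> zsp C"
  proof
    fix c assume "c \<in> C"
    then obtain a b where ab: "a \<in> A" "b \<in> B" "c = a * b" by (auto simp: C_def pset_def)
    have "x * c = (x * a) * b" using ab by simp
    then show "x * c \<in> zsp C" using zsp_prod[of "x*a" A b B] A ab by (simp add: C_def zsp_gen mult.assoc)
  qed
  moreover have "\<forall>c\<in>C. y * c \<in> zsp C"
  proof
    fix c assume "c \<in> C"
    then obtain a b where ab: "a \<in> A" "b \<in> B" "c = a * b" by (auto simp: C_def pset_def)
    have "y * c = a * (y * b)" using ab by simp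
    then show "y * c \<in> zsp C" using zsp_prod[of a A "y*b" B] B ab by (simp add: C_def zsp_gen mult.left_commute)
  qed
  ultimately show ?thesis by blast
qed

lemma algebraic_int_add_real:
  fixes x y :: real
  assumes "algebraic_int x" "algebraic_int y"
  shows "algebraic_int (x + y)"
proof -
  obtain C where C: "finite C" "1 \<in> C" "\<forall>c\<in>C. x * c \<in> zsp C" "\<forall>c\<in>C. y * c \<in> zsp C"
    using algint_stab_common[OF assms] by blast
  show ?thesis
    by (rule det_trick[OF C(1,2)]) (use C in \<open>auto simp: distrib_right intro: zsp_add\<close>)
qed

lemma algebraic_int_mult_real:
  fixes x y :: real
  assumes "algebraic_int x" "algebraic_int y"
  shows "algebraic_int (x * y)"
proof -
  obtain C where C: "finite C" "1 \<in> C" "\<forall>c\<in>C. x * c \<in> zsp C" "\<forall>c\<in>C. y * c \<in> zsp C"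
    using algint_stab_common[OF assms] by blast
  show ?thesis
  proof (rule det_trick[OF C(1,2)])
    fix c assume "c \<in> C"
    then have "y * c \<in> zsp C" using C by blast
    then have "x * (y * c) \<in> zsp C" using zsp_stab[of C x C "y * c"] C by blast
    then show "x * y * c \<in> zsp C" by (simp add: mult.assoc)
  qed
qed


lemma algebraic_int_of_int_real [simp]: "algebraic_int (of_int k :: real)"
  by (rule int_imp_algebraic_int) simp

lemma algebraic_int_one_real [simp]: "algebraic_int (1 :: real)"
  using algebraic_int_of_int_real[of 1] by simp

lemma sqrt_nonsquare_irrat:
  assumes "nonsquare d" "d \<ge> 0"
  shows "sqrt (of_int d) \<notin> \<rat>"
proof
  assume "sqrt (of_int d) \<in> \<rat>"
  moreover have "algebraic_int (sqrt (of_int d))" by (intro algebraic_int_sqrt) simp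
  ultimately have "sqrt (of_int d) \<in> \<int>" using rational_algebraic_int_is_int by blast
  then obtain s where s: "sqrt (of_int d) = of_int s" by (auto elim: Ints_cases)
  then have "(of_int d :: real) = of_int s ^ 2" using assms(2)
    by (metis of_int_0_le_iff real_sqrt_pow2)
  then have "d = s ^ 2" by (metis of_int_eq_iff of_int_power)
  then show False using assms(1) by (auto simp: nonsquare_def)
qed

lemma nonsquare_rat:
  assumes "nonsquare d" "d \<ge> 0"
  shows "(of_int d :: rat) \<noteq> q ^ 2"
proof
  assume h: "of_int d = q ^ 2"
  have "sqrt (of_int d) = sqrt ((of_rat q) ^ 2)"
    using arg_cong[OF h, of "of_rat :: rat \<Rightarrow> real"] by (simp add: of_rat_power)
  also have "\<dots> = of_rat \<bar>q\<bar>" by (simp add: real_sqrt_abs)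
  finally have "sqrt (of_int d) \<in> \<rat>" by simp
  then show False using sqrt_nonsquare_irrat[OF assms] by blast
qed

lemma qrep_unique:
  assumes "nonsquare d" "d \<ge> 0"
    and "of_rat a + of_rat b * sqrt (of_int d) = of_rat a' + of_rat b' * sqrt (of_int d)"
  shows "a = a' \<and> b = b'"
proof (cases "b = b'")
  case True
  then show ?thesis using assms(3) by (simp add: of_rat_eq_iff)
next
  case False
  have "of_rat (b - b') * sqrt (of_int d) = of_rat (a' - a)"
    using assms(3) by (simp add: of_rat_diff algebra_simps)
  then have "sqrt (of_int d) = of_rat ((a' - a) / (b - b'))"
    using False by (simp add: of_rat_divide field_simps)
  then have "sqrt (of_int d) \<in> \<rat>" by simp
  then show ?thesis using sqrt_nonsquare_irrat[OF assms(1,2)] by blast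
qed

lemma qnorm_eq:
  assumes "nonsquare d" "d \<ge> 0" "x = of_rat a + of_rat b * sqrt (of_int d)"
  shows "qnorm d x = a ^ 2 - of_int d * b ^ 2"
  unfolding qnorm_def
proof (rule the_equality)
  show "\<exists>a' b'. x = of_rat a' + of_rat b' * sqrt (of_int d) \<and> a ^ 2 - of_int d * b ^ 2 = a' ^ 2 - of_int d * b' ^ 2"
    using assms(3) by blast
next
  fix N assume "\<exists>a' b'. x = of_rat a' + of_rat b' * sqrt (of_int d) \<and> N = a' ^ 2 - of_int d * b' ^ 2"
  then obtain a' b' where "x = of_rat a' + of_rat b' * sqrt (of_int d)" "N = a' ^ 2 - of_int d * b' ^ 2"
    by blast
  then show "N = a ^ 2 - of_int d * b ^ 2" using qrep_unique[OF assms(1,2)] assms(3) by metis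
qed

lemma unit_data:
  assumes ns: "nonsquare d" and dpos: "d > 0"
    and u: "\<epsilon> \<in> unit_group (qfield d)" and gt: "\<epsilon> > 1" and n1: "qnorm d \<epsilon> = 1"
  shows "\<exists>N::int. qnorm d (\<epsilon> + 1) = of_int N \<and> N > 0 \<and> (\<epsilon> + 1)^2 = \<epsilon> * of_int N
            \<and> \<epsilon> + 1 \<in> qfield d \<and> 1 / \<epsilon> \<in> qfield d"
proof -
  let ?r = "sqrt (of_int d) :: real"
  have r2: "?r ^ 2 = of_int d" using dpos by simp
  from u obtain a b where ab: "\<epsilon> = of_rat a + of_rat b * ?r"
    by (auto simp: unit_group_def qfield_def)
  have ai: "algebraic_int \<epsilon>" "algebraic_int (1 / \<epsilon>)" using u by (auto simp: unit_group_def)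
  have "a ^ 2 - of_int d * b ^ 2 = 1" using qnorm_eq[OF ns _ ab] dpos n1 by simp
  then have nrm: "(of_rat a) ^ 2 - of_int d * (of_rat b) ^ 2 = (1::real)"
    by (metis of_rat_1 of_rat_diff of_rat_mult of_rat_of_int_eq of_rat_power)
  have "(of_rat a + of_rat b * ?r) * (of_rat a - of_rat b * ?r) = (of_rat a) ^ 2 - (of_rat b) ^ 2 * ?r ^ 2"
    by (simp add: algebra_simps power2_eq_square)
  also have "\<dots> = 1" using nrm r2 by (simp add: algebra_simps)
  finally have inv: "1 / \<epsilon> = of_rat a - of_rat b * ?r" using ab
    by (metis mult.commute nonzero_eq_divide_eq mult_zero_left zero_neq_one)
  have "algebraic_int (\<epsilon> + 1 / \<epsilon>)" using algebraic_int_add_real[OF ai] .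
  moreover have "\<epsilon> + 1 / \<epsilon> = of_rat (2 * a)" using ab inv by (simp add: of_rat_mult)
  ultimately have "of_rat (2 * a) \<in> (\<int> :: real set)"
    using rational_algebraic_int_is_int by (metis Rats_of_rat)
  then obtain t where t: "(of_rat (2 * a) :: real) = of_int t" by (auto elim: Ints_cases)
  then have t': "2 * a = of_int t" by (metis of_rat_eq_iff of_rat_of_int_eq)
  have "qnorm d (\<epsilon> + 1) = (a + 1) ^ 2 - of_int d * b ^ 2"
    by (rule qnorm_eq[OF ns]) (use dpos ab in \<open>auto simp: of_rat_add\<close>)
  also have "\<dots> = (a ^ 2 - of_int d * b ^ 2) + 2 * a + 1" by (simp add: algebra_simps power2_eq_square)
  also have "\<dots> = of_int (t + 2)" using \<open>a ^ 2 - of_int d * b ^ 2 = 1\<close> t' by simp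
  finally have qn: "qnorm d (\<epsilon> + 1) = of_int (t + 2)" .
  have epos: "\<epsilon> > 0" using gt by simp
  have "\<epsilon> + 1 / \<epsilon> > 0" using epos by (intro add_pos_pos) auto
  then have "of_int t > (0::real)" using t \<open>\<epsilon> + 1 / \<epsilon> = of_rat (2 * a)\<close> by simp
  then have tpos: "t + 2 > 0" by simp
  have "(\<epsilon> + 1) ^ 2 = \<epsilon> * (\<epsilon> + 1 / \<epsilon> + 2)" using epos by (simp add: field_simps power2_eq_square)
  also have "\<dots> = \<epsilon> * of_int (t + 2)" using t \<open>\<epsilon> + 1 / \<epsilon> = of_rat (2 * a)\<close> by simp
  finally have sq: "(\<epsilon> + 1) ^ 2 = \<epsilon> * of_int (t + 2)" .
  have "\<epsilon> + 1 \<in> qfield d" unfolding qfield_def using ab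
    by (intro CollectI exI[of _ "a + 1"] exI[of _ b]) (simp add: of_rat_add)
  moreover have "1 / \<epsilon> \<in> qfield d" unfolding qfield_def using inv
    by (intro CollectI exI[of _ a] exI[of _ "- b"]) (simp add: of_rat_minus)
  ultimately show ?thesis using qn tpos sq by blast
qed


lemma mult_ident:
  fixes r1 r2 D1 D2 a b c e a' b' c' e' :: real
  assumes "r1 * r1 = D1" "r2 * r2 = D2"
  shows "(a + b*r1 + c*r2 + e*r1*r2) * (a' + b'*r1 + c'*r2 + e'*r1*r2) =
     (a*a' + b*b'*D1 + c*c'*D2 + e*e'*D1*D2) + (a*b' + b*a' + (c*e' + e*c')*D2) * r1
     + (a*c' + c*a' + (b*e' + e*b')*D1) * r2 + (a*e' + e*a' + b*c' + c*b') * r1 * r2"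
  unfolding assms[symmetric] by (simp add: algebra_simps)

lemma rat_cases:
  fixes a b c e D1 D2 :: rat
  assumes D1: "D1 \<noteq> 0" and D2: "D2 \<noteq> 0" and ns: "\<And>q. D1 * D2 \<noteq> q ^ 2"
    and e1: "a*b + D2*c*e = 0" and e2: "a*c + D1*b*e = 0" and e3: "a*e + b*c = 0"
  shows "(b=0 \<and> c=0 \<and> e=0) \<or> (a=0 \<and> c=0 \<and> e=0) \<or> (a=0 \<and> b=0 \<and> e=0) \<or> (a=0 \<and> b=0 \<and> c=0)"
proof (cases "a = 0")
  case False
  have "a^2 * b = - D2 * e * (a * c)"
  proof -
    have "a * b = - D2 * c * e" using e1 by (simp add: algebra_simps eq_neg_iff_add_eq_0)
    then have "a * (a * b) = a * (- D2 * c * e)" by simp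
    then show ?thesis by (simp add: power2_eq_square algebra_simps)
  qed
  also have "a * c = - D1 * b * e" using e2 by (simp add: algebra_simps eq_neg_iff_add_eq_0)
  finally have "b * (a^2 - D1 * D2 * e^2) = 0" by (simp add: power2_eq_square algebra_simps)
  moreover have "a^2 - D1 * D2 * e^2 \<noteq> 0"
  proof (cases "e = 0")
    case True then show ?thesis using False by simp
  next
    case e: False
    show ?thesis
    proof
      assume "a^2 - D1 * D2 * e^2 = 0"
      then have "D1 * D2 = (a / e) ^ 2" using e by (simp add: field_simps)
      then show False using ns by blast
    qed
  qed
  ultimately have b: "b = 0" by simp
  then have "c = 0" using e2 False by simp
  then have "e = 0" using e3 False b by simp
  then show ?thesis using b \<open>c = 0\<close> by simp
next
  case True
  then have bc: "b * c = 0" and ce: "c * e = 0" and be: "b * e = 0"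
    using e1 e2 e3 D1 D2 by (simp_all add: mult.assoc)
  then show ?thesis using True by auto
qed

locale bq =
  fixes d1 d2 :: int
  assumes d1pos: "d1 > 0" and d2pos: "d2 > 0"
    and ns1: "nonsquare d1" and ns2: "nonsquare d2" and ns12: "nonsquare (d1 * d2)"
begin

abbreviation "r1 \<equiv> sqrt (of_int d1) :: real"
abbreviation "r2 \<equiv> sqrt (of_int d2) :: real"
abbreviation "K \<equiv> biquad_field d1 d2"

lemma r1sq: "r1 * r1 = of_int d1" using d1pos by simp
lemma r2sq: "r2 * r2 = of_int d2" using d2pos by simp

lemma K_mem: "of_rat a + of_rat b * r1 + of_rat c * r2 + of_rat e * r1 * r2 \<in> K"
  unfolding biquad_field_def by blast

lemma K_mult:
  assumes "x \<in> K" "y \<in> K" shows "x * y \<in> K"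
proof -
  obtain a b c e where x: "x = of_rat a + of_rat b * r1 + of_rat c * r2 + of_rat e * r1 * r2"
    using assms(1) unfolding biquad_field_def by blast
  obtain a' b' c' e' where y: "y = of_rat a' + of_rat b' * r1 + of_rat c' * r2 + of_rat e' * r1 * r2"
    using assms(2) unfolding biquad_field_def by blast
  have "x * y = of_rat (a*a' + b*b'* of_int d1 + c*c'* of_int d2 + e*e'* of_int d1* of_int d2)
     + of_rat (a*b' + b*a' + (c*e' + e*c')* of_int d2) * r1
     + of_rat (a*c' + c*a' + (b*e' + e*b')* of_int d1) * r2 + of_rat (a*e' + e*a' + b*c' + c*b') * r1 * r2"
    unfolding x y mult_ident[OF r1sq r2sq] by (simp add: of_rat_add of_rat_mult)
  then show ?thesis using K_mem by simp
qed

lemma K_rat: "of_rat q \<in> K"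
  using K_mem[of q 0 0 0] by simp

lemma K_one: "1 \<in> K" using K_rat[of 1] by simp

lemma K_r1: "r1 \<in> K" using K_mem[of 0 1 0 0] by simp
lemma K_r2: "r2 \<in> K" using K_mem[of 0 0 1 0] by simp
lemma K_r12: "r1 * r2 \<in> K" using K_mem[of 0 0 0 1] by simp

lemma qfield1_K: "x \<in> qfield d1 \<Longrightarrow> x \<in> K"
  unfolding qfield_def using K_mem by (auto) (metis K_mem[of _ _ 0 0] add.right_neutral mult_zero_left of_rat_0)

lemma qfield2_K: "x \<in> qfield d2 \<Longrightarrow> x \<in> K"
  unfolding qfield_def using K_mem by (auto) (metis K_mem[of _ 0 _ 0] add.right_neutral add_0 mult_zero_left of_rat_0)

lemma qfield12_K: "x \<in> qfield (d1 * d2) \<Longrightarrow> x \<in> K"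
proof -
  assume "x \<in> qfield (d1 * d2)"
  then obtain a b where "x = of_rat a + of_rat b * sqrt (of_int (d1 * d2))" unfolding qfield_def by blast
  then have "x = of_rat a + of_rat 0 * r1 + of_rat 0 * r2 + of_rat b * r1 * r2"
    by (simp add: real_sqrt_mult mult.assoc)
  then show ?thesis using K_mem[of a 0 0 b] by simp
qed

lemma LI:
  assumes h: "of_rat a + of_rat b * r1 + of_rat c * r2 + of_rat e * r1 * r2 = 0"
  shows "a = 0 \<and> b = 0 \<and> c = 0 \<and> e = 0"
proof -
  have ce: "c = 0 \<and> e = 0"
  proof (rule ccontr)
    assume nz: "\<not> (c = 0 \<and> e = 0)"
    define D where "D = c^2 - of_int d1 * e^2"
    have D: "D \<noteq> 0"
    proof (cases "e = 0")
      case True then show ?thesis using nz by (simp add: D_def)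
    next
      case False
      show ?thesis
      proof
        assume "D = 0"
        then have "of_int d1 = (c / e) ^ 2" using False by (simp add: D_def field_simps)
        then show False using nonsquare_rat[OF ns1] d1pos by simp
      qed
    qed
    define x where "x = - (a*c - b*e* of_int d1) / D"
    define y where "y = - (b*c - a*e) / D"
    have "x * c + y * e * of_int d1 = - ((a*c - b*e * of_int d1) * c + (b*c - a*e) * e * of_int d1) / D"
      using D unfolding x_def y_def by (simp add: field_simps)
    also have "(a*c - b*e * of_int d1) * c + (b*c - a*e) * e * of_int d1 = a * D"
      by (simp add: D_def power2_eq_square algebra_simps)
    finally have xy1: "x * c + y * e * of_int d1 = - a" using D by simp
    have "x * e + y * c = - ((a*c - b*e * of_int d1) * e + (b*c - a*e) * c) / D"
      using D unfolding x_def y_def by (simp add: field_simps)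
    also have "(a*c - b*e * of_int d1) * e + (b*c - a*e) * c = b * D"
      by (simp add: D_def power2_eq_square algebra_simps)
    finally have xy2: "x * e + y * c = - b" using D by simp
    have Y: "of_rat c + of_rat e * r1 \<noteq> 0"
    proof
      assume "of_rat c + of_rat e * r1 = 0"
      then have "of_rat c + of_rat e * r1 = of_rat 0 + of_rat 0 * r1" by simp
      then have "c = 0 \<and> e = 0" using qrep_unique[OF ns1] d1pos by (metis less_imp_le)
      then show False using nz by simp
    qed
    have "(of_rat x + of_rat y * r1) * (of_rat c + of_rat e * r1)
        = of_rat (x * c + y * e * of_int d1) + of_rat (x * e + y * c) * r1"
      using r1sq by (simp add: of_rat_add of_rat_mult algebra_simps)
    also have "\<dots> = - (of_rat a + of_rat b * r1)" using xy1 xy2 by (simp add: of_rat_minus)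
    also have "\<dots> = r2 * (of_rat c + of_rat e * r1)" using h by (simp add: algebra_simps eq_neg_iff_add_eq_0)
    finally have "r2 = of_rat x + of_rat y * r1" using Y by simp
    then have "r2 * r2 = (of_rat x + of_rat y * r1) * (of_rat x + of_rat y * r1)" by simp
    also have "\<dots> = of_rat (x^2 + of_int d1 * y^2) + of_rat (2 * x * y) * r1"
      using r1sq by (simp add: of_rat_add of_rat_mult algebra_simps power2_eq_square)
    finally have "of_rat (of_int d2) + of_rat 0 * r1 = of_rat (x^2 + of_int d1 * y^2) + of_rat (2 * x * y) * r1"
      using r2sq by simp
    then have q1: "of_int d2 = x^2 + of_int d1 * y^2" and q2: "2 * x * y = 0"
      using qrep_unique[OF ns1] d1pos by (metis less_imp_le)+
    show False
    proof (cases "x = 0")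
      case True
      then have "of_int (d1 * d2) = (of_int d1 * y) ^ 2" using q1 by (simp add: power2_eq_square)
      then show False using nonsquare_rat[OF ns12, of "of_int d1 * y"] d1pos d2pos by simp
    next
      case False
      then have "y = 0" using q2 by simp
      then have "of_int d2 = x ^ 2" using q1 by simp
      then show False using nonsquare_rat[OF ns2] d2pos by simp
    qed
  qed
  then have "of_rat a + of_rat b * r1 = of_rat 0 + of_rat 0 * r1" using h by simp
  then have "a = 0 \<and> b = 0" using qrep_unique[OF ns1] d1pos by (metis less_imp_le)
  then show ?thesis using ce by simp
qed

lemma K_square:
  assumes "w \<in> K" "w ^ 2 = of_rat M"
  shows "\<exists>q. M = q^2 \<or> M = of_int d1 * q^2 \<or> M = of_int d2 * q^2 \<or> M = of_int (d1 * d2) * q^2"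
proof -
  obtain a b c e where w: "w = of_rat a + of_rat b * r1 + of_rat c * r2 + of_rat e * r1 * r2"
    using assms(1) unfolding biquad_field_def by blast
  define D1 :: rat where "D1 = of_int d1"
  define D2 :: rat where "D2 = of_int d2"
  have "w ^ 2 = of_rat (a*a + b*b*D1 + c*c*D2 + e*e*D1*D2)
     + of_rat (a*b + b*a + (c*e + e*c)*D2) * r1
     + of_rat (a*c + c*a + (b*e + e*b)*D1) * r2 + of_rat (a*e + e*a + b*c + c*b) * r1 * r2"
    unfolding power2_eq_square w mult_ident[OF r1sq r2sq] by (simp add: of_rat_add of_rat_mult D1_def D2_def)
  then have "of_rat (a*a + b*b*D1 + c*c*D2 + e*e*D1*D2 - M)
     + of_rat (a*b + b*a + (c*e + e*c)*D2) * r1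
     + of_rat (a*c + c*a + (b*e + e*b)*D1) * r2 + of_rat (a*e + e*a + b*c + c*b) * r1 * r2 = 0"
    using assms(2) by (simp add: of_rat_diff)
  from LI[OF this] have
    A: "M = a*a + b*b*D1 + c*c*D2 + e*e*D1*D2" and
    e1: "a*b + D2*c*e = 0" and e2: "a*c + D1*b*e = 0" and e3: "a*e + b*c = 0"
    by (simp_all add: algebra_simps)
  have "D1 \<noteq> 0" "D2 \<noteq> 0" using d1pos d2pos by (simp_all add: D1_def D2_def)
  moreover have "\<And>q. D1 * D2 \<noteq> q ^ 2" using nonsquare_rat[OF ns12] d1pos d2pos
    by (simp add: D1_def D2_def)
  ultimately have "(b=0 \<and> c=0 \<and> e=0) \<or> (a=0 \<and> c=0 \<and> e=0) \<or> (a=0 \<and> b=0 \<and> e=0) \<or> (a=0 \<and> b=0 \<and> c=0)"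
    using rat_cases e1 e2 e3 by blast
  then show ?thesis
  proof (elim disjE)
    assume "b=0 \<and> c=0 \<and> e=0" then show ?thesis using A by (intro exI[of _ a]) (simp add: power2_eq_square)
  next
    assume "a=0 \<and> c=0 \<and> e=0" then show ?thesis using A by (intro exI[of _ b]) (simp add: power2_eq_square D1_def)
  next
    assume "a=0 \<and> b=0 \<and> e=0" then show ?thesis using A by (intro exI[of _ c]) (simp add: power2_eq_square D2_def)
  next
    assume "a=0 \<and> b=0 \<and> c=0" then show ?thesis using A by (intro exI[of _ e]) (simp add: power2_eq_square D1_def D2_def)
  qed
qed

end


lemma powi_closed:
  fixes S :: "real set"
  assumes one: "1 \<in> S" and mul: "\<And>a b. a \<in> S \<Longrightarrow> b \<in> S \<Longrightarrow> a * b \<in> S"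
    and x: "x \<in> S" and xi: "1 / x \<in> S"
  shows "x powi n \<in> S"
proof -
  have pw: "y ^ k \<in> S" if "y \<in> S" for y k
    by (induction k) (use one mul that in auto)
  show ?thesis
    unfolding power_int_def using pw[OF x] pw[OF xi] by (simp add: inverse_eq_divide)
qed

lemma of_rat_powi: "of_rat (q powi n) = (of_rat q :: real) powi n"
  by (simp add: power_int_def of_rat_power of_rat_inverse)

lemma algebraic_int_sq_root:
  fixes x :: real
  assumes "algebraic_int (x ^ 2)"
  shows "algebraic_int x"
proof (rule algebraic_int_root[OF assms, of "monom 1 2"])
  show "poly (monom 1 2) x = x ^ 2" by (simp add: poly_monom)
  show "\<forall>i. coeff (monom 1 2) i \<in> \<int>" by (simp add: coeff_monom)
  show "lead_coeff (monom (1::real) 2) = 1" by (simp add: degree_monom_eq)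
  show "degree (monom (1::real) 2) > 0" by (simp add: degree_monom_eq)
qed

lemma algint_powi:
  fixes x :: real
  assumes "algebraic_int x" "algebraic_int (1 / x)"
  shows "algebraic_int (x powi n)"
  using powi_closed[of "{x. algebraic_int x}" x n] assms algebraic_int_mult_real by auto

context bq
begin

lemma unit_decomp:
  assumes u: "\<epsilon> \<in> unit_group (qfield d)" and gt: "\<epsilon> > 1" and n1: "qnorm d \<epsilon> = 1"
    and ns: "nonsquare d" and dpos: "d > 0" and sub: "\<And>x. x \<in> qfield d \<Longrightarrow> x \<in> K"
  shows "\<exists>u. u \<in> K \<and> 1 / u \<in> K \<and> u \<noteq> 0 \<and>
           \<epsilon> = u ^ 2 / of_int (squarefree_part \<lfloor>qnorm d (\<epsilon> + 1)\<rfloor>) \<and>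
           squarefree_part \<lfloor>qnorm d (\<epsilon> + 1)\<rfloor> > 0"
proof -
  obtain N :: int where N: "qnorm d (\<epsilon> + 1) = of_int N" "N > 0" "(\<epsilon> + 1)^2 = \<epsilon> * of_int N"
      "\<epsilon> + 1 \<in> qfield d" "1 / \<epsilon> \<in> qfield d"
    using unit_data[OF ns dpos u gt n1] by blast
  have fl: "\<lfloor>qnorm d (\<epsilon> + 1)\<rfloor> = N" using N(1) by simp
  define m where "m = squarefree_part N"
  define k where "k = square_part N"
  have Nmk: "N = m * k ^ 2" unfolding m_def k_def by (rule squarefree_decompose)
  have k0: "k \<noteq> 0" using Nmk N(2) by auto
  have mpos: "m > 0"
  proof -
    have "k ^ 2 > 0" using k0 by simp
    then show ?thesis using Nmk N(2) by (metis zero_less_mult_pos2)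
  qed
  have epos: "\<epsilon> > 0" using gt by simp
  define u where "u = (\<epsilon> + 1) * of_rat (1 / of_int k)"
  have uK: "u \<in> K" unfolding u_def by (intro K_mult K_rat sub N(4))
  have u0: "u \<noteq> 0" unfolding u_def using epos k0 by simp
  have "1 / u = (\<epsilon> + 1) * (1 / \<epsilon>) * of_rat (of_int k / of_int N)"
  proof -
    have "(\<epsilon> + 1) * (1 / \<epsilon>) * of_int k / of_int N = of_int k * ((\<epsilon> + 1) / (\<epsilon> * of_int N))"
      by simp
    also have "\<epsilon> * of_int N = (\<epsilon> + 1) ^ 2" using N(3) by simp
    also have "of_int k * ((\<epsilon> + 1) / (\<epsilon> + 1) ^ 2) = of_int k / (\<epsilon> + 1)"
      using epos by (simp add: power2_eq_square)
    finally show ?thesis unfolding u_def by (simp add: of_rat_divide)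
  qed
  then have uiK: "1 / u \<in> K" by (metis K_mult K_rat sub N(4,5))
  have "u ^ 2 = (\<epsilon> + 1) ^ 2 / of_int k ^ 2" unfolding u_def
    by (simp add: of_rat_divide power_divide)
  also have "\<dots> = \<epsilon> * of_int m" using N(3) k0 unfolding Nmk by (simp add: field_simps)
  finally have "\<epsilon> = u ^ 2 / of_int m" using mpos by simp
  then show ?thesis using uK uiK u0 mpos fl unfolding m_def by auto
qed

end


theorem proposition5p1:
  fixes d1 d2 :: int and \<epsilon>1 \<epsilon>2 \<epsilon>3 :: real and n1 n2 n3 :: int
  assumes d_pos: "d1 > 0" "d2 > 0"
      and d_nonsq: "nonsquare d1" "nonsquare d2" "nonsquare (d1 * d2)"
      and fu: "fundamental_unit d1 \<epsilon>1" "fundamental_unit d2 \<epsilon>2" "fundamental_unit (d1 * d2) \<epsilon>3"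
      and norm1: "qnorm d1 \<epsilon>1 = 1" "qnorm d2 \<epsilon>2 = 1" "qnorm (d1 * d2) \<epsilon>3 = 1"
  defines "m1 \<equiv> squarefree_part \<lfloor>qnorm d1 (\<epsilon>1 + 1)\<rfloor>"
      and "m2 \<equiv> squarefree_part \<lfloor>qnorm d2 (\<epsilon>2 + 1)\<rfloor>"
      and "m3 \<equiv> squarefree_part \<lfloor>qnorm (d1 * d2) (\<epsilon>3 + 1)\<rfloor>"
  shows "(\<exists>\<eta> \<in> unit_group (biquad_field d1 d2).
            \<eta> ^ 2 = \<epsilon>1 powi n1 * \<epsilon>2 powi n2 * \<epsilon>3 powi n3)
     \<longleftrightarrow> (\<exists>q::rat. q \<noteq> 0 \<and>
            (let M = (of_int m1 :: rat) powi n1 * of_int m2 powi n2 * of_int m3 powi n3 in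
              M = q ^ 2 \<or> M = of_int d1 * q ^ 2 \<or> M = of_int d2 * q ^ 2
              \<or> M = of_int (d1 * d2) * q ^ 2))"
proof -
  interpret bq d1 d2 using d_pos d_nonsq by unfold_locales
  have uni: "\<epsilon>1 \<in> unit_group (qfield d1)" "\<epsilon>2 \<in> unit_group (qfield d2)" "\<epsilon>3 \<in> unit_group (qfield (d1 * d2))"
    and gt: "\<epsilon>1 > 1" "\<epsilon>2 > 1" "\<epsilon>3 > 1"
    using fu by (auto simp: fundamental_unit_def)
  have d12: "d1 * d2 > 0" using d_pos by simp
  obtain u1 where u1: "u1 \<in> K" "1 / u1 \<in> K" "u1 \<noteq> 0" "\<epsilon>1 = u1 ^ 2 / of_int m1" "m1 > 0"
    using unit_decomp[OF uni(1) gt(1) norm1(1) d_nonsq(1) d_pos(1) qfield1_K] unfolding m1_def by blast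
  obtain u2 where u2: "u2 \<in> K" "1 / u2 \<in> K" "u2 \<noteq> 0" "\<epsilon>2 = u2 ^ 2 / of_int m2" "m2 > 0"
    using unit_decomp[OF uni(2) gt(2) norm1(2) d_nonsq(2) d_pos(2) qfield2_K] unfolding m2_def by blast
  obtain u3 where u3: "u3 \<in> K" "1 / u3 \<in> K" "u3 \<noteq> 0" "\<epsilon>3 = u3 ^ 2 / of_int m3" "m3 > 0"
    using unit_decomp[OF uni(3) gt(3) norm1(3) d_nonsq(3) d12 qfield12_K] unfolding m3_def by blast
  define M :: rat where "M = (of_int m1 :: rat) powi n1 * of_int m2 powi n2 * of_int m3 powi n3"
  define Mr :: real where "Mr = of_rat M"
  have Mr: "Mr = (of_int m1 :: real) powi n1 * of_int m2 powi n2 * of_int m3 powi n3"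
    unfolding Mr_def M_def by (simp add: of_rat_mult of_rat_powi)
  have M0: "M \<noteq> 0" unfolding M_def using u1 u2 u3 by (simp add: power_int_not_zero)
  then have Mr0: "Mr \<noteq> 0" unfolding Mr_def by simp
  define U where "U = u1 powi n1 * u2 powi n2 * u3 powi n3"
  have Kpow: "x powi n \<in> K" if "x \<in> K" "1 / x \<in> K" for x n
    using powi_closed[of K x n] that K_one K_mult by blast
  have UK: "U \<in> K" unfolding U_def
    using Kpow[OF u1(1,2), of n1] Kpow[OF u2(1,2), of n2] Kpow[OF u3(1,2), of n3] by (metis K_mult)
  have "1 / U = (1 / u1) powi n1 * (1 / u2) powi n2 * (1 / u3) powi n3"
    unfolding U_def by (simp add: power_int_one_over)
  moreover have "(1 / u1) powi n1 \<in> K" using Kpow[of "1 / u1" n1] u1 by simp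
  moreover have "(1 / u2) powi n2 \<in> K" using Kpow[of "1 / u2" n2] u2 by simp
  moreover have "(1 / u3) powi n3 \<in> K" using Kpow[of "1 / u3" n3] u3 by simp
  ultimately have UiK: "1 / U \<in> K" by (metis K_mult)
  have U0: "U \<noteq> 0" unfolding U_def using u1 u2 u3 by (simp add: power_int_not_zero)
  define P where "P = \<epsilon>1 powi n1 * \<epsilon>2 powi n2 * \<epsilon>3 powi n3"
  have epow: "(u ^ 2 / of_int m) powi n = (u powi n) ^ 2 / (of_int m :: real) powi n" for u :: real and m n
    by (simp add: power_int_divide_distrib power_int_power power_int_power' mult.commute)
  have PU: "P = U ^ 2 / Mr"
    unfolding P_def U_def Mr u1(4) u2(4) u3(4) epow by (simp add: power_mult_distrib)
  have P0: "P \<noteq> 0" using PU U0 Mr0 by simp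
  have ai: "algebraic_int x" "algebraic_int (1 / x)" if "x \<in> unit_group F" for x F
    using that by (auto simp: unit_group_def)
  have aP: "algebraic_int P" unfolding P_def
    using algint_powi[OF ai[OF uni(1)], of n1] algint_powi[OF ai[OF uni(2)], of n2]
      algint_powi[OF ai[OF uni(3)], of n3] by (metis algebraic_int_mult_real)
  have "1 / P = (1 / \<epsilon>1) powi n1 * (1 / \<epsilon>2) powi n2 * (1 / \<epsilon>3) powi n3"
    unfolding P_def by (simp add: power_int_one_over)
  moreover have "algebraic_int ((1 / \<epsilon>1) powi n1)" using algint_powi[of "1 / \<epsilon>1" n1] ai[OF uni(1)] by simp
  moreover have "algebraic_int ((1 / \<epsilon>2) powi n2)" using algint_powi[of "1 / \<epsilon>2" n2] ai[OF uni(2)] by simp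
  moreover have "algebraic_int ((1 / \<epsilon>3) powi n3)" using algint_powi[of "1 / \<epsilon>3" n3] ai[OF uni(3)] by simp
  ultimately have aPi: "algebraic_int (1 / P)" by (metis algebraic_int_mult_real)
  have rhs_iff: "(\<exists>q::rat. q \<noteq> 0 \<and> (M = q ^ 2 \<or> M = of_int d1 * q ^ 2 \<or> M = of_int d2 * q ^ 2
              \<or> M = of_int (d1 * d2) * q ^ 2)) \<longleftrightarrow> (\<exists>\<eta> \<in> K. \<eta> \<noteq> 0 \<and> algebraic_int \<eta> \<and> algebraic_int (1/\<eta>) \<and> \<eta> ^ 2 = P)"
  proof
    assume "\<exists>q::rat. q \<noteq> 0 \<and> (M = q ^ 2 \<or> M = of_int d1 * q ^ 2 \<or> M = of_int d2 * q ^ 2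
              \<or> M = of_int (d1 * d2) * q ^ 2)"
    then obtain q :: rat where q0: "q \<noteq> 0" and
      qd: "M = q ^ 2 \<or> M = of_int d1 * q ^ 2 \<or> M = of_int d2 * q ^ 2 \<or> M = of_int (d1 * d2) * q ^ 2"
      by blast
    have "\<exists>s c. s \<in> K \<and> s * s = of_int c \<and> c \<noteq> 0 \<and> M = of_int c * q ^ 2"
      using qd
    proof (elim disjE)
      assume "M = q ^ 2" then show ?thesis using K_one by (intro exI[of _ 1] exI[of _ 1]) auto
    next
      assume "M = of_int d1 * q ^ 2" then show ?thesis using K_r1 r1sq d_pos
        by (intro exI[of _ r1] exI[of _ d1]) auto
    next
      assume "M = of_int d2 * q ^ 2" then show ?thesis using K_r2 r2sq d_pos
        by (intro exI[of _ r2] exI[of _ d2]) auto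
    next
      assume "M = of_int (d1 * d2) * q ^ 2" then show ?thesis using K_r12 r1sq r2sq d_pos
        by (intro exI[of _ "r1 * r2"] exI[of _ "d1 * d2"]) (auto simp: algebra_simps)
    qed
    then obtain s c where s: "s \<in> K" "s * s = of_int c" "c \<noteq> 0" "M = of_int c * q ^ 2" by blast
    define \<eta> where "\<eta> = U * s * of_rat (1 / (q * of_int c))"
    have etaK: "\<eta> \<in> K" unfolding \<eta>_def using UK s(1) K_rat by (intro K_mult)
    have Mrc: "Mr = of_int c * (of_rat q) ^ 2" unfolding Mr_def s(4) by (simp add: of_rat_mult of_rat_power)
    have "\<eta> ^ 2 = U ^ 2 * (s * s) / ((of_rat q) ^ 2 * (of_int c) ^ 2)"
      unfolding \<eta>_def by (simp add: of_rat_divide of_rat_mult power_mult_distrib power2_eq_square mult_ac)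
    also have "\<dots> = U ^ 2 / Mr" unfolding s(2) Mrc using s(3) q0 by (simp add: power2_eq_square)
    finally have eta2: "\<eta> ^ 2 = P" using PU by simp
    have eta0: "\<eta> \<noteq> 0" using eta2 P0 by auto
    have "algebraic_int \<eta>" using aP eta2 by (intro algebraic_int_sq_root[of \<eta>]) simp
    moreover have "(1 / \<eta>) ^ 2 = 1 / P" using eta2 by (simp add: power_one_over)
    then have "algebraic_int (1 / \<eta>)" using aPi
      by (intro algebraic_int_sq_root[of "1 / \<eta>"]) simp
    ultimately show "\<exists>\<eta> \<in> K. \<eta> \<noteq> 0 \<and> algebraic_int \<eta> \<and> algebraic_int (1/\<eta>) \<and> \<eta> ^ 2 = P"
      using etaK eta0 eta2 by blast
  next
    assume "\<exists>\<eta> \<in> K. \<eta> \<noteq> 0 \<and> algebraic_int \<eta> \<and> algebraic_int (1/\<eta>) \<and> \<eta> ^ 2 = P"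
    then obtain \<eta> where eta: "\<eta> \<in> K" "\<eta> ^ 2 = P" by blast
    define w where "w = \<eta> * of_rat M * (1 / U)"
    have wK: "w \<in> K" unfolding w_def using eta(1) K_rat UiK by (intro K_mult)
    have "w ^ 2 = P * Mr ^ 2 / U ^ 2" unfolding w_def Mr_def eta(2)[symmetric]
      by (simp add: power_mult_distrib power_divide)
    also have "\<dots> = Mr" unfolding PU using U0 Mr0 by (simp add: power2_eq_square)
    finally have "w ^ 2 = of_rat M" unfolding Mr_def .
    from K_square[OF wK this] obtain q where
      qd: "M = q ^ 2 \<or> M = of_int d1 * q ^ 2 \<or> M = of_int d2 * q ^ 2 \<or> M = of_int (d1 * d2) * q ^ 2"
      by blast
    have "q \<noteq> 0" using qd M0 by auto
    then show "\<exists>q::rat. q \<noteq> 0 \<and> (M = q ^ 2 \<or> M = of_int d1 * q ^ 2 \<or> M = of_int d2 * q ^ 2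
              \<or> M = of_int (d1 * d2) * q ^ 2)" using qd by blast
  qed
  have lhs: "(\<exists>\<eta> \<in> unit_group (biquad_field d1 d2). \<eta> ^ 2 = \<epsilon>1 powi n1 * \<epsilon>2 powi n2 * \<epsilon>3 powi n3)
     \<longleftrightarrow> (\<exists>\<eta> \<in> K. \<eta> \<noteq> 0 \<and> algebraic_int \<eta> \<and> algebraic_int (1/\<eta>) \<and> \<eta> ^ 2 = P)"
    unfolding unit_group_def P_def by blast
  have rhs: "(\<exists>q::rat. q \<noteq> 0 \<and>
            (let M = (of_int m1 :: rat) powi n1 * of_int m2 powi n2 * of_int m3 powi n3 in
              M = q ^ 2 \<or> M = of_int d1 * q ^ 2 \<or> M = of_int d2 * q ^ 2
              \<or> M = of_int (d1 * d2) * q ^ 2)) \<longleftrightarrow>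
        (\<exists>q::rat. q \<noteq> 0 \<and> (M = q ^ 2 \<or> M = of_int d1 * q ^ 2 \<or> M = of_int d2 * q ^ 2
              \<or> M = of_int (d1 * d2) * q ^ 2))"
    unfolding M_def Let_def by (rule refl)
  show ?thesis unfolding lhs rhs rhs_iff by (rule refl)
qed

end
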